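(* Let $\rho_{\min}$ be the predicate defined in every unital C*-algebra $A$ by $\rho_{\min}^A(x)=\inf\{\|x-p\| : p\in A,\ p \text{ a minimal projection}\}$. Then $\rho_{\min}$ is definable (in the language $L_{C^*}$ of unital C*-algebras) in each finite dimensional C*-algebra.
   Context: A projection is $p$ with $p^2=p^*=p$; a nonzero projection $p$ is minimal if every projection $q$ with $qp=q$ satisfies $q=0$ or $q=p$. "Definable" is in the sense of continuous model theory: $\rho_{\min}^A$ is a definable predicate of $\mathrm{Th}_{L_{C^*}}(A)$, i.e. a uniform limit of $L_{C^*}$-formulas evaluated in $A$. *)

theory Defs
  imports "HOL-Analysis.Analysis"
begin

text \<open>A unital C*-algebra is modelled as a type of class real_normed_algebra_1 and
banach (complete, associative, unital, norm 1 = 1, submultiplicative norm), together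
with an involution st and a complex scalar multiplication cs extending the real one.\<close>

definition cstar_alg :: "('a::{real_normed_algebra_1,banach} \<Rightarrow> 'a) \<Rightarrow> (complex \<Rightarrow> 'a \<Rightarrow> 'a) \<Rightarrow> bool" where
  "cstar_alg st cs \<longleftrightarrow>
     (\<forall>r x. cs (complex_of_real r) x = scaleR r x) \<and>
     (\<forall>a b x. cs (a * b) x = cs a (cs b x)) \<and>
     (\<forall>a b x. cs (a + b) x = cs a x + cs b x) \<and>
     (\<forall>a x y. cs a (x + y) = cs a x + cs a y) \<and>
     (\<forall>a x y. cs a (x * y) = cs a x * y) \<and>
     (\<forall>a x y. cs a (x * y) = x * cs a y) \<and>
     (\<forall>a x. norm (cs a x) = cmod a * norm x) \<and>
     (\<forall>x. st (st x) = x) \<and>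
     (\<forall>x y. st (x + y) = st x + st y) \<and>
     (\<forall>x y. st (x * y) = st y * st x) \<and>
     (\<forall>a x. st (cs a x) = cs (cnj a) (st x)) \<and>
     (\<forall>x. norm (st x * x) = (norm x)\<^sup>2)"

definition fin_dim_cstar :: "('a::{real_normed_algebra_1,banach} \<Rightarrow> 'a) \<Rightarrow> (complex \<Rightarrow> 'a \<Rightarrow> 'a) \<Rightarrow> bool" where
  "fin_dim_cstar st cs \<longleftrightarrow> cstar_alg st cs \<and>
     (\<exists>B. finite B \<and> (\<forall>x. \<exists>c. x = (\<Sum>b\<in>B. cs (c b) b)))"

definition is_projection :: "('a::ring_1 \<Rightarrow> 'a) \<Rightarrow> 'a \<Rightarrow> bool" where
  "is_projection st p \<longleftrightarrow> p * p = p \<and> st p = p"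

definition minimal_projection :: "('a::ring_1 \<Rightarrow> 'a) \<Rightarrow> 'a \<Rightarrow> bool" where
  "minimal_projection st p \<longleftrightarrow> is_projection st p \<and> p \<noteq> 0 \<and>
     (\<forall>q. is_projection st q \<and> q * p = q \<longrightarrow> q = 0 \<or> q = p)"

definition rho_min :: "('a::real_normed_algebra_1 \<Rightarrow> 'a) \<Rightarrow> 'a \<Rightarrow> real" where
  "rho_min st x = Inf {norm (x - p) | p. minimal_projection st p}"

datatype tm = Var nat | Zero | One | Add tm tm | Mult tm tm | Star tm | Smult complex tm

datatype fm =
    Atom tm
  | Cst real
  | FUn "real \<Rightarrow> real" fm
  | Bin "real \<Rightarrow> real \<Rightarrow> real" fm fm
  | FSup nat fm                       (* sup over the ball of radius n, binds variable 0 *)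
  | FInf nat fm                       (* inf over the ball of radius n, binds variable 0 *)

primrec tm_eval :: "('a::real_normed_algebra_1 \<Rightarrow> 'a) \<Rightarrow> (complex \<Rightarrow> 'a \<Rightarrow> 'a) \<Rightarrow> (nat \<Rightarrow> 'a) \<Rightarrow> tm \<Rightarrow> 'a" where
  "tm_eval st cs env (Var i) = env i"
| "tm_eval st cs env Zero = 0"
| "tm_eval st cs env One = 1"
| "tm_eval st cs env (Add s t) = tm_eval st cs env s + tm_eval st cs env t"
| "tm_eval st cs env (Mult s t) = tm_eval st cs env s * tm_eval st cs env t"
| "tm_eval st cs env (Star t) = st (tm_eval st cs env t)"
| "tm_eval st cs env (Smult c t) = cs c (tm_eval st cs env t)"

primrec fm_eval :: "('a::real_normed_algebra_1 \<Rightarrow> 'a) \<Rightarrow> (complex \<Rightarrow> 'a \<Rightarrow> 'a) \<Rightarrow> (nat \<Rightarrow> 'a) \<Rightarrow> fm \<Rightarrow> real" where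
  "fm_eval st cs env (Atom t) = norm (tm_eval st cs env t)"
| "fm_eval st cs env (Cst r) = r"
| "fm_eval st cs env (FUn f \<phi>) = f (fm_eval st cs env \<phi>)"
| "fm_eval st cs env (Bin f \<phi> \<psi>) = f (fm_eval st cs env \<phi>) (fm_eval st cs env \<psi>)"
| "fm_eval st cs env (FSup n \<phi>) =
     (SUP y\<in>{y. norm y \<le> real n}. fm_eval st cs (case_nat y env) \<phi>)"
| "fm_eval st cs env (FInf n \<phi>) =
     (INF y\<in>{y. norm y \<le> real n}. fm_eval st cs (case_nat y env) \<phi>)"

primrec wf_fm :: "fm \<Rightarrow> bool" where
  "wf_fm (Atom t) = True"
| "wf_fm (Cst r) = True"
| "wf_fm (FUn f \<phi>) = (continuous_on UNIV f \<and> wf_fm \<phi>)"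
| "wf_fm (Bin f \<phi> \<psi>) = (continuous_on UNIV (\<lambda>(a, b). f a b) \<and> wf_fm \<phi> \<and> wf_fm \<psi>)"
| "wf_fm (FSup n \<phi>) = wf_fm \<phi>"
| "wf_fm (FInf n \<phi>) = wf_fm \<phi>"

text \<open>A unary predicate P on A is definable in A if on every bounded ball (domain D_n)
it is a uniform limit of interpretations of formulas in the free variable 0.\<close>

definition definable_in :: "('a::real_normed_algebra_1 \<Rightarrow> 'a) \<Rightarrow> (complex \<Rightarrow> 'a \<Rightarrow> 'a) \<Rightarrow> ('a \<Rightarrow> real) \<Rightarrow> bool" where
  "definable_in st cs P \<longleftrightarrow>
     (\<forall>n::nat. \<forall>\<epsilon>>0. \<exists>\<phi>. wf_fm \<phi> \<and>
        (\<forall>x env. norm x \<le> real n \<longrightarrow> \<bar>fm_eval st cs (case_nat x env) \<phi> - P x\<bar> \<le> \<epsilon>))"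

end

theory Submission
  imports Defs "HOL-Computational_Algebra.Polynomial" "HOL-Computational_Algebra.Fundamental_Theorem_Algebra"
begin

locale cstar =
  fixes st :: "'a::{real_normed_algebra_1,banach} \<Rightarrow> 'a" and cs :: "complex \<Rightarrow> 'a \<Rightarrow> 'a"
  assumes cstar: "cstar_alg st cs"
begin

lemma cs_real: "cs (complex_of_real r) x = scaleR r x"
  using cstar unfolding cstar_alg_def by simp

lemma cs_mult_sc: "cs (a * b) x = cs a (cs b x)"
  using cstar unfolding cstar_alg_def by simp

lemma cs_add_sc: "cs (a + b) x = cs a x + cs b x"
  using cstar unfolding cstar_alg_def by simp

lemma cs_add: "cs a (x + y) = cs a x + cs a y"
  using cstar unfolding cstar_alg_def by simp

lemma cs_ml: "cs a (x * y) = cs a x * y"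
  using cstar unfolding cstar_alg_def by simp

lemma cs_mr: "cs a (x * y) = x * cs a y"
proof -
  have "\<forall>a x y. cs a (x * y) = x * cs a y" using cstar unfolding cstar_alg_def by blast
  then show ?thesis by blast
qed

lemma cs_norm: "norm (cs a x) = cmod a * norm x"
  using cstar unfolding cstar_alg_def by simp

lemma st_st[simp]: "st (st x) = x"
  using cstar unfolding cstar_alg_def by simp

lemma st_add: "st (x + y) = st x + st y"
  using cstar unfolding cstar_alg_def by simp

lemma st_mult: "st (x * y) = st y * st x"
  using cstar unfolding cstar_alg_def by simp

lemma st_cs: "st (cs a x) = cs (cnj a) (st x)"
  using cstar unfolding cstar_alg_def by simp

lemma cstar_id: "norm (st x * x) = (norm x)\<^sup>2"
  using cstar unfolding cstar_alg_def by simp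

lemma st_zero[simp]: "st 0 = 0"
  using st_add[of 0 0] by simp

lemma st_minus: "st (- x) = - st x"
  using st_add[of x "-x"] by (simp add: eq_neg_iff_add_eq_0 add.commute)

lemma st_diff: "st (x - y) = st x - st y"
  using st_add[of x "-y"] by (simp add: st_minus)

lemma st_one[simp]: "st 1 = 1"
proof -
  have "st 1 = st 1 * st (st 1)" by simp
  also have "\<dots> = st (st 1 * 1)" by (simp only: st_mult)
  also have "\<dots> = 1" by simp
  finally show ?thesis .
qed

lemma st_scaleR: "st (scaleR r x) = scaleR r (st x)"
  using st_cs[of "complex_of_real r" x] by (simp add: cs_real)

lemma cs_zero_sc[simp]: "cs 0 x = 0"
  using cs_real[of 0 x] by simp

lemma cs_neg_sc: "cs (- a) x = - cs a x"
  using cs_add_sc[of a "-a" x] by (simp add: eq_neg_iff_add_eq_0 add.commute)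

lemma norm_st[simp]: "norm (st x) = norm x"
proof -
  have a: "norm y \<le> norm (st y)" for y
  proof (cases "y = 0")
    case False
    have "(norm y)^2 \<le> norm (st y) * norm y"
      using cstar_id[of y] norm_mult_ineq[of "st y" y] by simp
    then show ?thesis using False by (simp add: power2_eq_square)
  qed simp
  show ?thesis using a[of x] a[of "st x"] by simp
qed

lemma st_zero_iff: "st x * x = 0 \<longleftrightarrow> x = 0"
  using cstar_id[of x] by auto

lemma proj_norm: "p * p = p \<Longrightarrow> st p = p \<Longrightarrow> norm p = 0 \<or> norm p = 1"
  using cstar_id[of p] by (auto simp: power2_eq_square)

lemma proj_norm_le: "p * p = p \<Longrightarrow> st p = p \<Longrightarrow> norm p \<le> 1"
  using proj_norm by force

lemma proj_norm1: "p * p = p \<Longrightarrow> st p = p \<Longrightarrow> p \<noteq> 0 \<Longrightarrow> norm p = 1"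
  using proj_norm by force

lemma st_cont: "continuous_on UNIV st"
proof -
  have "dist (st x) (st y) = dist x y" for x y
    by (metis dist_norm norm_st st_diff)
  then show ?thesis
    by (metis continuous_on_iff dist_commute UNIV_I)
qed

lemma st_tendsto: "(f \<longlongrightarrow> l) F \<Longrightarrow> ((\<lambda>n. st (f n)) \<longlongrightarrow> st l) F"
  using st_cont continuous_on_tendsto_compose[of UNIV st f l F] by auto

end

lemma span_closed_seq:
  fixes S :: "'a::real_normed_vector set"
  assumes bw: "\<forall>(x::nat \<Rightarrow> 'a) R. (\<forall>n. x n \<in> span S) \<and> (\<forall>n. norm (x n) \<le> R) \<longrightarrow>
                 (\<exists>l\<in>span S. \<exists>r. strict_mono r \<and> (x \<circ> r) \<longlonglongrightarrow> l)"
    and y: "\<forall>n. y n \<in> span S" and lim: "y \<longlonglongrightarrow> l"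
  shows "l \<in> span S"
proof -
  obtain R where R: "\<forall>n. norm (y n) \<le> R"
    using convergent_imp_Bseq[OF convergentI[OF lim]] unfolding Bseq_def by (meson less_imp_le)
  obtain l' r where l': "l' \<in> span S" "strict_mono r" "(y \<circ> r) \<longlonglongrightarrow> l'"
    using bw y R by blast
  have "(y \<circ> r) \<longlonglongrightarrow> l" using LIMSEQ_subseq_LIMSEQ[OF lim l'(2)] .
  then have "l = l'" using l'(3) LIMSEQ_unique by blast
  then show ?thesis using l' by simp
qed

lemma bw_span:
  fixes S :: "'a::real_normed_vector set"
  assumes "finite S"
  shows "\<forall>(x::nat \<Rightarrow> 'a) R. (\<forall>n. x n \<in> span S) \<and> (\<forall>n. norm (x n) \<le> R) \<longrightarrow>
                 (\<exists>l\<in>span S. \<exists>r. strict_mono r \<and> (x \<circ> r) \<longlonglongrightarrow> l)"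
  using assms
proof (induction rule: finite_induct)
  case empty
  show ?case
  proof (intro allI impI)
    fix x :: "nat \<Rightarrow> 'a" and R :: real
    assume "(\<forall>n. x n \<in> span {}) \<and> (\<forall>n. norm (x n) \<le> R)"
    then have "\<forall>n. x n = 0" by simp
    then show "\<exists>l\<in>span {}. \<exists>r. strict_mono r \<and> (x \<circ> r) \<longlonglongrightarrow> l"
      by (intro bexI[of _ 0] exI[of _ id]) (auto simp: strict_mono_def o_def)
  qed
next
  case (insert b S)
  have IH: "\<And>(x::nat \<Rightarrow> 'a) R. (\<forall>n. x n \<in> span S) \<Longrightarrow> (\<forall>n. norm (x n) \<le> R) \<Longrightarrow>
                 \<exists>l\<in>span S. \<exists>r. strict_mono r \<and> (x \<circ> r) \<longlonglongrightarrow> l"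
    using insert.IH by blast
  show ?case
  proof (cases "b \<in> span S")
    case True
    then show ?thesis using insert.IH span_redundant[OF True] by simp
  next
    case False
    show ?thesis
    proof (intro allI impI)
      fix x :: "nat \<Rightarrow> 'a" and R :: real
      assume asm: "(\<forall>n. x n \<in> span (insert b S)) \<and> (\<forall>n. norm (x n) \<le> R)"
      then have "\<forall>n. \<exists>k. x n - k *\<^sub>R b \<in> span S" by (simp add: span_breakdown_eq)
      then obtain c where c: "\<And>n. x n - c n *\<^sub>R b \<in> span S" by metis
      have R: "\<And>n. norm (x n) \<le> R" using asm by blast
      have bnd: "\<exists>M. \<forall>n. \<bar>c n\<bar> \<le> M"
      proof (rule ccontr)
        assume "\<not> ?thesis"
        then have "\<forall>m::nat. \<exists>n. \<bar>c n\<bar> > real m + 1" by (meson not_le)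
        then obtain j where j: "\<And>m. \<bar>c (j m)\<bar> > real m + 1" by metis
        define u where "u m = (1 / c (j m)) *\<^sub>R (x (j m) - c (j m) *\<^sub>R b)" for m
        have us: "\<forall>m. - u m \<in> span S"
          unfolding u_def using c by (simp add: span_scale span_neg)
        have cne: "c (j m) \<noteq> 0" for m using j[of m] by auto
        have ueq: "- u m - b = - ((1 / c (j m)) *\<^sub>R x (j m))" for m
          using cne[of m] by (simp add: u_def algebra_simps)
        have "(\<lambda>m. - u m - b) \<longlonglongrightarrow> 0"
        proof (rule Lim_null_comparison)
          show "\<forall>\<^sub>F m in sequentially. norm (- u m - b) \<le> \<bar>R\<bar> / (real m + 1)"
          proof (rule always_eventually, rule allI)
            fix m
            have "norm (- u m - b) = norm (x (j m)) / \<bar>c (j m)\<bar>" by (simp add: ueq)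
            also have "\<dots> \<le> \<bar>R\<bar> / \<bar>c (j m)\<bar>"
              using R[of "j m"] by (simp add: divide_right_mono)
            also have "\<dots> \<le> \<bar>R\<bar> / (real m + 1)"
              using j[of m] by (intro divide_left_mono) auto
            finally show "norm (- u m - b) \<le> \<bar>R\<bar> / (real m + 1)" .
          qed
          show "(\<lambda>m. \<bar>R\<bar> / (real m + 1)) \<longlonglongrightarrow> 0"
            using LIMSEQ_Suc[OF lim_const_over_n[of "\<bar>R\<bar>"]] by (simp add: add.commute)
        qed
        from tendsto_add[OF this tendsto_const[of b]]
        have "(\<lambda>m. - u m) \<longlonglongrightarrow> b" by simp
        then have "b \<in> span S" using span_closed_seq[OF insert.IH us] by blast
        then show False using False by blast
      qed
      then obtain M where M: "\<And>n. \<bar>c n\<bar> \<le> M" by blast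
      have "bounded (range c)"
        unfolding bounded_iff using M by auto
      then obtain c0 r1 where r1: "strict_mono r1" "(c \<circ> r1) \<longlonglongrightarrow> c0"
        using bounded_imp_convergent_subsequence by blast
      define v where "v n = x (r1 n) - c (r1 n) *\<^sub>R b" for n
      have vs: "\<forall>n. v n \<in> span S" using c by (simp add: v_def)
      have vb: "\<forall>n. norm (v n) \<le> R + M * norm b"
      proof
        fix n
        have "norm (v n) \<le> norm (x (r1 n)) + \<bar>c (r1 n)\<bar> * norm b"
          unfolding v_def by (metis norm_scaleR norm_triangle_ineq4)
        also have "\<dots> \<le> R + M * norm b"
          using R[of "r1 n"] M[of "r1 n"] by (intro add_mono mult_right_mono) auto
        finally show "norm (v n) \<le> R + M * norm b" .
      qed
      obtain v0 r2 where r2: "v0 \<in> span S" "strict_mono r2" "(v \<circ> r2) \<longlonglongrightarrow> v0"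
        using IH[OF vs vb] by blast
      have "(x \<circ> (r1 \<circ> r2)) = (\<lambda>n. (v \<circ> r2) n + (c \<circ> r1 \<circ> r2) n *\<^sub>R b)"
        by (auto simp: v_def)
      moreover have "(\<lambda>n. (v \<circ> r2) n + (c \<circ> r1 \<circ> r2) n *\<^sub>R b) \<longlonglongrightarrow> v0 + c0 *\<^sub>R b"
        by (intro tendsto_intros r2(3) LIMSEQ_subseq_LIMSEQ[OF r1(2) r2(2)])
      ultimately have "(x \<circ> (r1 \<circ> r2)) \<longlonglongrightarrow> v0 + c0 *\<^sub>R b" by simp
      moreover have "v0 + c0 *\<^sub>R b \<in> span (insert b S)"
        using r2(1) unfolding span_breakdown_eq by (intro exI[of _ c0]) simp
      moreover have "strict_mono (r1 \<circ> r2)" using r1(1) r2(2) by (rule strict_mono_o)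
      ultimately show "\<exists>l\<in>span (insert b S). \<exists>r. strict_mono r \<and> (x \<circ> r) \<longlonglongrightarrow> l"
        by blast
    qed
  qed
qed

definition peval :: "real poly \<Rightarrow> 'a::real_algebra_1 \<Rightarrow> 'a" where
  "peval P h = fold_coeffs (\<lambda>a f. a *\<^sub>R 1 + h * f) P 0"

lemma peval_0[simp]: "peval 0 h = 0"
  by (simp add: peval_def)

lemma peval_pCons[simp]: "peval (pCons a p) h = a *\<^sub>R 1 + h * peval p h"
  by (cases "p = 0 \<and> a = 0") (auto simp add: peval_def)

lemma peval_const[simp]: "peval [:c:] h = c *\<^sub>R 1"
  by simp

lemma peval_add[simp]: "peval (p + q) h = peval p h + peval q h"
proof (induct p arbitrary: q)
  case 0 then show ?case by simp
next
  case (pCons a p)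
  then show ?case by (cases q) (simp add: algebra_simps)
qed

lemma peval_smult[simp]: "peval (smult c p) h = c *\<^sub>R peval p h"
  by (induct p) (simp_all add: algebra_simps)

lemma peval_minus[simp]: "peval (- p) h = - peval p h"
  using peval_smult[of "-1" p h] by simp

lemma peval_diff[simp]: "peval (p - q) h = peval p h - peval q h"
  using peval_add[of p "-q" h] by simp

lemma peval_mult[simp]: "peval (p * q) h = peval p h * peval q h"
  by (induct p) (simp_all add: algebra_simps)

lemma peval_comm: "peval p h * peval q h = peval q h * peval p h"
  by (metis peval_mult mult.commute)

lemma peval_comm_h: "h * peval p h = peval p h * h"
  using peval_comm[of "[:0,1:]" h p] by simp

lemma peval_real: "peval p (x::real) = poly p x"
  by (induct p) simp_all

lemma peval_complex: "peval p (z::complex) = poly (map_poly of_real p) z"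
  by (induct p) (auto simp: map_poly_pCons scaleR_conv_of_real)

lemma peval_lin: "peval [:a, 1:] h = a *\<^sub>R 1 + h"
  by simp

lemma peval_of_real: "peval p (of_real x :: complex) = of_real (peval p x)"
  by (induct p) (simp_all add: scaleR_conv_of_real)

lemma real_root_or_quadratic:
  fixes P :: "real poly"
  assumes "degree P \<ge> 1"
  shows "(\<exists>l::real. peval P l = 0) \<or> (\<exists>a b Q. b \<noteq> 0 \<and> P = [:a\<^sup>2 + b\<^sup>2, -2*a, 1:] * Q)"
proof -
  have "degree (map_poly complex_of_real P) = degree P"
    by (rule degree_map_poly) simp
  then have "\<not> constant (poly (map_poly complex_of_real P))"
    using assms constant_degree by (metis not_one_le_zero)
  then obtain \<mu> where "poly (map_poly complex_of_real P) \<mu> = 0"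
    using fundamental_theorem_of_algebra by blast
  then have mu: "peval P \<mu> = 0" by (simp add: peval_complex)
  show ?thesis
  proof (cases "Im \<mu> = 0")
    case True
    then have "\<mu> = of_real (Re \<mu>)" by (simp add: complex_eq_iff)
    then have "peval P (Re \<mu>) = 0" using mu peval_of_real[of P "Re \<mu>"] by simp
    then show ?thesis by blast
  next
    case False
    define a where "a = Re \<mu>"
    define b where "b = Im \<mu>"
    define D where "D = [:a\<^sup>2 + b\<^sup>2, -2*a, 1:]"
    have Dmu: "peval D \<mu> = 0"
      unfolding D_def a_def b_def
      by (simp add: complex_eq_iff power2_eq_square algebra_simps)
    have D0: "D \<noteq> 0" "degree D = 2" unfolding D_def by auto
    define R where "R = P mod D"
    have PR: "P = (P div D) * D + R" unfolding R_def by simp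
    have Rmu: "peval R \<mu> = 0"
      using arg_cong[OF PR, of "\<lambda>p. peval p \<mu>"] Dmu mu by simp
    have "R = 0"
    proof (rule ccontr)
      assume R0: "R \<noteq> 0"
      then have "degree R < 2" using degree_mod_less[OF D0(1), of P] D0(2) R_def by auto
      obtain r0 R1 where R1: "R = pCons r0 R1" by (cases R) auto
      have "degree R1 = 0"
        using \<open>degree R < 2\<close> R1 by (cases "R1 = 0") auto
      then obtain r1 where "R1 = [:r1:]" by (meson degree_eq_zeroE)
      then have Req: "R = [:r0, r1:]" using R1 by simp
      have "complex_of_real r0 + \<mu> * complex_of_real r1 = 0"
        using Rmu Req by (simp add: scaleR_conv_of_real)
      then have "Im \<mu> * r1 = 0" "r0 + Re \<mu> * r1 = 0" by (simp_all add: complex_eq_iff)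
      then have "r1 = 0" "r0 = 0" using False by auto
      then show False using R0 Req by simp
    qed
    then have "P = D * (P div D)" using PR by (simp add: mult.commute)
    then show ?thesis using False unfolding D_def b_def by blast
  qed
qed

lemma peval_monom[simp]: "peval (monom c n) h = c *\<^sub>R h ^ n"
  by (induct n) (simp_all add: monom_Suc monom_0 algebra_simps)

lemma peval_sum: "peval (\<Sum>v\<in>T. f v) h = (\<Sum>v\<in>T. peval (f v) h)"
  by (induct T rule: infinite_finite_induct) simp_all

lemma annihilating_poly:
  fixes h :: "'a::{real_normed_algebra_1}" and S :: "'a set"
  assumes "finite S" "span S = UNIV"
  shows "\<exists>Q. Q \<noteq> 0 \<and> peval Q h = 0"
proof (cases "inj (\<lambda>i::nat. h ^ i)")
  case False
  then obtain i j where ij: "i \<noteq> j" "h ^ i = h ^ j" unfolding inj_def by blast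
  show ?thesis
  proof (intro exI conjI)
    show "monom 1 i - monom 1 j \<noteq> (0::real poly)"
    proof
      assume "monom 1 i - monom 1 j = (0::real poly)"
      then have "coeff (monom 1 i - monom 1 j) i = (0::real)" by simp
      then show False using ij(1) by simp
    qed
    show "peval (monom 1 i - monom 1 j) h = 0" using ij(2) by simp
  qed
next
  case True
  define W where "W = range (\<lambda>i::nat. h ^ i)"
  have "infinite W" unfolding W_def using True by (simp add: range_inj_infinite)
  moreover have "W \<subseteq> span S" using assms(2) by simp
  ultimately have "dependent W" using independent_span_bound[OF assms(1)] by blast
  then obtain T U where TU: "finite T" "T \<subseteq> W" "(\<Sum>v\<in>T. U v *\<^sub>R v) = 0" "\<exists>v\<in>T. U v \<noteq> 0"
    unfolding dependent_explicit by blast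
  define idx where "idx v = inv (\<lambda>i::nat. h ^ i) v" for v
  have idx: "h ^ idx v = v" if "v \<in> T" for v
    using that TU(2) unfolding idx_def W_def by (auto simp: f_inv_into_f)
  define Q where "Q = (\<Sum>v\<in>T. monom (U v) (idx v))"
  have "peval Q h = (\<Sum>v\<in>T. U v *\<^sub>R h ^ idx v)"
    unfolding Q_def peval_sum by simp
  also have "\<dots> = (\<Sum>v\<in>T. U v *\<^sub>R v)" by (rule sum.cong) (simp_all add: idx)
  finally have Q0: "peval Q h = 0" using TU(3) by simp
  obtain v0 where v0: "v0 \<in> T" "U v0 \<noteq> 0" using TU(4) by blast
  have "coeff Q (idx v0) = (\<Sum>v\<in>T. if idx v = idx v0 then U v else 0)"
    unfolding Q_def coeff_sum by simp
  also have "\<dots> = (\<Sum>v\<in>T. if v = v0 then U v else 0)"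
    by (rule sum.cong) (auto, metis idx v0(1))
  also have "\<dots> = U v0" using v0(1) TU(1) by simp
  finally have "Q \<noteq> 0" using v0(2) by auto
  then show ?thesis using Q0 by blast
qed

context cstar
begin

lemma st_peval: "st h = h \<Longrightarrow> st (peval Q h) = peval Q h"
  by (induct Q) (simp_all add: st_add st_scaleR st_mult peval_comm_h)

lemma p_peval_comm:
  assumes "p * h = h" "h * p = h"
  shows "p * peval Q h = peval Q h * p"
proof (induct Q)
  case 0 then show ?case by simp
next
  case (pCons a Q)
  have "p * (a *\<^sub>R 1 + h * peval Q h) = a *\<^sub>R p + (p * h) * peval Q h"
    by (simp add: algebra_simps)
  also have "\<dots> = a *\<^sub>R p + h * peval Q h" using assms by simp
  also have "\<dots> = a *\<^sub>R p + (h * p) * peval Q h" using assms by simp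
  also have "\<dots> = (a *\<^sub>R 1 + h * peval Q h) * p"
    using pCons(2) by (simp add: algebra_simps)
  finally show ?case by simp
qed

lemma cs_zero_v[simp]: "cs a 0 = 0"
  using cs_ml[of a 0 0] by simp

lemma cs_neg_y: "cs a (- y) = - cs a y"
  using cs_add[of a y "-y"] by (simp add: eq_neg_iff_add_eq_0 add.commute)

lemma no_imag:
  assumes k: "st k = k" and y: "st y = y" and ky: "k * y = y * k"
    and eq: "k * (k * y) + (b\<^sup>2) *\<^sub>R y = 0" and b: "b \<noteq> 0"
  shows "y = 0"
proof -
  define c where "c = \<i> * complex_of_real b"
  define z where "z = cs c y"
  define u where "u = k * y"
  define w where "w = u + z"
  have stu: "st u = u" unfolding u_def using k y ky by (simp add: st_mult)
  have cnjc: "cnj c = - c" unfolding c_def by simp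
  have stz: "st z = - z" unfolding z_def using y by (simp add: st_cs cnjc cs_neg_sc)
  have stw: "st w = u - z" unfolding w_def by (simp add: st_add stu stz)
  have uz: "u * z = z * u"
  proof -
    have "u * z = cs c (u * y)" unfolding z_def by (simp add: cs_mr)
    also have "u * y = y * u" unfolding u_def using ky by (simp add: mult.assoc)
    also have "cs c (y * u) = z * u" unfolding z_def by (simp add: cs_ml)
    finally show ?thesis .
  qed
  have zz: "z * z = - ((b\<^sup>2) *\<^sub>R (y * y))"
  proof -
    have "z * z = cs c (y * cs c y)" unfolding z_def by (simp only: cs_ml)
    also have "\<dots> = cs c (cs c (y * y))" by (simp only: cs_mr)
    also have "\<dots> = cs (c * c) (y * y)" by (simp add: cs_mult_sc)
    also have "c * c = complex_of_real (- (b\<^sup>2))" unfolding c_def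
      by (simp add: power2_eq_square algebra_simps)
    finally show ?thesis by (simp only: cs_real) simp
  qed
  have uu: "u * u = - ((b\<^sup>2) *\<^sub>R (y * y))"
  proof -
    have "u * u = (k * (k * y)) * y" unfolding u_def by (metis ky mult.assoc)
    also have "k * (k * y) = - ((b\<^sup>2) *\<^sub>R y)" using eq by (simp add: eq_neg_iff_add_eq_0)
    finally show ?thesis by simp
  qed
  have "st w * w = (u - z) * (u + z)" by (subst stw) (simp add: w_def)
  also have "\<dots> = u * u + u * z - z * u - z * z" by (simp add: algebra_simps)
  also have "\<dots> = 0" using uz zz uu by simp
  finally have "w = 0" using st_zero_iff by blast
  then have uz0: "u = - z" unfolding w_def by (simp add: eq_neg_iff_add_eq_0)
  then have "st u = z" using stz by (simp add: st_minus)
  then have "z = - z" using stu uz0 by simp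
  then have "(2::real) *\<^sub>R z = 0" by (metis scaleR_2 add.right_inverse)
  then have "z = 0" by simp
  then have "cmod c * norm y = 0" using cs_norm[of c y] unfolding z_def by simp
  moreover have "cmod c \<noteq> 0" unfolding c_def using b by (simp add: norm_mult)
  ultimately show "y = 0" by simp
qed

end

context cstar
begin

lemma corner_scalar:
  fixes S :: "'a set"
  assumes finS: "finite S" and spS: "span S = UNIV" and mp: "minimal_projection st p"
    and sa: "st h = h" and ph: "p * h = h" and hp: "h * p = h"
  shows "\<exists>l. h = l *\<^sub>R p"
proof -
  define F where "F Q = peval Q h * p" for Q
  have pp: "p * p = p" "st p = p" "p \<noteq> 0"
    using mp unfolding minimal_projection_def is_projection_def by auto
  have pmin: "q = 0 \<or> q = p" if "st q = q" "q * q = q" "q * p = q" for q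
    using mp that unfolding minimal_projection_def is_projection_def by auto
  have pc: "p * peval Q h = peval Q h * p" for Q using p_peval_comm[OF ph hp] .
  have F_mult: "F (Q1 * Q2) = F Q1 * F Q2" for Q1 Q2
  proof -
    have "F Q1 * F Q2 = peval Q1 h * ((p * peval Q2 h) * p)" by (simp add: F_def mult.assoc)
    also have "\<dots> = peval Q1 h * (peval Q2 h * (p * p))" by (simp add: pc mult.assoc)
    also have "\<dots> = F (Q1 * Q2)" by (simp add: pp F_def mult.assoc)
    finally show ?thesis by simp
  qed
  have F_add: "F (Q1 + Q2) = F Q1 + F Q2" for Q1 Q2 by (simp add: F_def algebra_simps)
  have F_diff: "F (Q1 - Q2) = F Q1 - F Q2" for Q1 Q2 by (simp add: F_def algebra_simps)
  have F_smult: "F (smult c Q) = c *\<^sub>R F Q" for c Q by (simp add: F_def)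
  have F_const: "F [:c:] = c *\<^sub>R p" for c by (simp add: F_def)
  have F_lin: "F [:a, 1:] = a *\<^sub>R p + h" for a by (simp add: F_def algebra_simps hp)
  have F_sa: "st (F Q) = F Q" for Q by (simp add: F_def st_mult st_peval sa pp pc)
  have F_pl: "p * F Q = F Q" for Q unfolding F_def by (metis pc mult.assoc pp(1))
  have F_comm: "F Q1 * F Q2 = F Q2 * F Q1" for Q1 Q2
    by (metis F_mult mult.commute)
  obtain Q0 where Q0: "Q0 \<noteq> 0" "peval Q0 h = 0" using annihilating_poly[OF finS spS] by blast
  have ex: "\<exists>Q. Q \<noteq> 0 \<and> F Q = 0 \<and> degree Q = degree Q0" using Q0 by (auto simp: F_def)
  define n0 where "n0 = (LEAST n. \<exists>Q. Q \<noteq> 0 \<and> F Q = 0 \<and> degree Q = n)"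
  obtain P where P: "P \<noteq> 0" "F P = 0" "degree P = n0"
  proof -
    have ex': "\<exists>n. \<exists>Q. Q \<noteq> 0 \<and> F Q = 0 \<and> degree Q = n" using ex by blast
    show ?thesis using LeastI_ex[OF ex'] that unfolding n0_def by blast
  qed
  have Pmin: "F Q \<noteq> 0" if "Q \<noteq> 0" "degree Q < degree P" for Q
    using not_less_Least[of "degree Q" "\<lambda>n. \<exists>Q. Q \<noteq> 0 \<and> F Q = 0 \<and> degree Q = n"] that P(3)
    unfolding n0_def by auto
  have degP: "degree P \<ge> 1"
  proof (rule ccontr)
    assume "\<not> degree P \<ge> 1"
    then have "degree P = 0" by simp
    then obtain c where "P = [:c:]" by (meson degree_eq_zeroE)
    then have "c \<noteq> 0" "c *\<^sub>R p = 0" using P F_const by auto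
    then show False using pp(3) by simp
  qed
  from real_root_or_quadratic[OF degP] show ?thesis
  proof (elim disjE exE conjE)
    fix a b Q
    assume b: "b \<noteq> 0" and PD: "P = [:a\<^sup>2 + b\<^sup>2, - 2 * a, 1:] * Q"
    define D where "D = [:a\<^sup>2 + b\<^sup>2, - 2 * a, 1:]"
    have D0: "D \<noteq> 0" "degree D = 2" unfolding D_def by auto
    have Q0: "Q \<noteq> 0" using P(1) PD by auto
    have "degree P = 2 + degree Q" using PD D0 Q0 degree_mult_eq unfolding D_def by metis
    then have "F Q \<noteq> 0" using Pmin[OF Q0] by simp
    define L where "L = [:-a, 1:]"
    have DL: "D = L * L + [:b\<^sup>2:]" unfolding D_def L_def
      by (simp add: power2_eq_square algebra_simps)
    have "F D * F Q = 0" using P(2) PD F_mult unfolding D_def by metis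
    then have "(F L * F L + b\<^sup>2 *\<^sub>R p) * F Q = 0" unfolding DL F_add F_mult F_const .
    then have "F L * (F L * F Q) + b\<^sup>2 *\<^sub>R F Q = 0"
      by (simp add: algebra_simps F_pl)
    then have "F Q = 0"
      using no_imag[OF F_sa F_sa F_comm _ b] by blast
    then show ?thesis using \<open>F Q \<noteq> 0\<close> by blast
  next
    fix l :: real
    assume "peval P l = 0"
    then have "poly P l = 0" by (simp add: peval_real)
    then obtain Q where PQ: "P = [:-l, 1:] * Q" using poly_eq_0_iff_dvd by blast
    define L where "L = [:-l, 1:]"
    have PQ': "P = L * Q" using PQ unfolding L_def .
    have L0: "L \<noteq> 0" "degree L = 1" unfolding L_def by auto
    have Q0: "Q \<noteq> 0" using P(1) PQ' by auto
    have dPQ: "degree P = 1 + degree Q" using PQ' L0 Q0 degree_mult_eq by metis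
    have FQ: "F Q \<noteq> 0" using Pmin[OF Q0] dPQ by simp
    show ?thesis
    proof (cases "poly Q l = 0")
      case True
      then obtain R where QR: "Q = L * R" using poly_eq_0_iff_dvd unfolding L_def by blast
      have R0: "R \<noteq> 0" using Q0 QR by auto
      have "F (L * R) \<noteq> 0" using Pmin[of "L * R"] QR Q0 dPQ by simp
      moreover have "st (F (L * R)) * F (L * R) = 0"
      proof -
        have "L * R * (L * R) = R * P" using PQ' QR by (simp add: algebra_simps)
        then have "F (L * R) * F (L * R) = F R * F P" by (metis F_mult)
        then show ?thesis using P(2) F_sa by simp
      qed
      ultimately show ?thesis using st_zero_iff by blast
    next
      case False
      define c where "c = poly Q l"
      have c0: "c \<noteq> 0" using False c_def by simp
      have "poly (Q - [:c:]) l = 0" by (simp add: c_def)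
      then obtain R where QR: "Q - [:c:] = L * R" using poly_eq_0_iff_dvd unfolding L_def by blast
      have QQ: "Q * Q = P * R + smult c Q"
      proof -
        have "Q = L * R + [:c:]" using QR by (simp add: algebra_simps)
        then have "Q * Q = Q * (L * R) + Q * [:c:]" by (metis distrib_left)
        then show ?thesis using PQ' by (simp add: algebra_simps)
      qed
      have FQQ: "F Q * F Q = c *\<^sub>R F Q"
        using arg_cong[OF QQ, of F] by (simp add: F_mult F_add F_smult P(2))
      define e where "e = (1 / c) *\<^sub>R F Q"
      have ee: "e * e = e" unfolding e_def using c0
        by (simp add: FQQ power2_eq_square)
      have ste: "st e = e" unfolding e_def by (simp add: st_scaleR F_sa)
      have ep: "e * p = e" unfolding e_def
        by (simp add: F_def mult.assoc pp)
      from pmin[OF ste ee ep] show ?thesis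
      proof
        assume "e = 0"
        then have "F Q = 0" unfolding e_def using c0 by simp
        then show ?thesis using FQ by blast
      next
        assume "e = p"
        moreover have "c *\<^sub>R e = F Q" unfolding e_def using c0 by simp
        ultimately have "F Q = c *\<^sub>R p" by simp
        then have FQc: "F (Q - [:c:]) = 0" by (simp add: F_diff F_const)
        have "Q - [:c:] = 0"
        proof (rule ccontr)
          assume ne: "Q - [:c:] \<noteq> 0"
          have "degree (Q - [:c:]) \<le> degree Q" by (rule degree_diff_le) auto
          then show False using Pmin[OF ne] FQc dPQ by simp
        qed
        then have "Q = [:c:]" by simp
        then have "P = smult c L" using PQ' by simp
        then have "c *\<^sub>R F L = 0" using P(2) F_smult by metis
        then have "F L = 0" using c0 by simp
        then have "h = l *\<^sub>R p" using F_lin[of "-l"] unfolding L_def by (simp add: algebra_simps)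
        then show ?thesis by blast
      qed
    qed
  qed
qed

end

locale fcstar = cstar st cs
  for st :: "'a::{real_normed_algebra_1,banach} \<Rightarrow> 'a" and cs :: "complex \<Rightarrow> 'a \<Rightarrow> 'a" +
  fixes S :: "'a set"
  assumes finS: "finite S" and spS: "span S = UNIV"
begin

lemma bwA:
  fixes x :: "nat \<Rightarrow> 'a"
  assumes "\<forall>n. norm (x n) \<le> R"
  shows "\<exists>l r. strict_mono r \<and> (x \<circ> r) \<longlonglongrightarrow> l"
proof -
  have "\<forall>n. x n \<in> span S" using spS by simp
  from bw_span[OF finS, rule_format, OF conjI[OF this assms]] show ?thesis by blast
qed

lemma minproj_closed:
  assumes my: "\<forall>n. minimal_projection st (y n)" and lim: "y \<longlonglongrightarrow> p"
  shows "minimal_projection st p"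
proof -
  have yp: "y n * y n = y n" "st (y n) = y n" "y n \<noteq> 0" for n
  proof -
    have "minimal_projection st (y n)" using my by blast
    then show "y n * y n = y n" "st (y n) = y n" "y n \<noteq> 0"
      unfolding minimal_projection_def is_projection_def by blast+
  qed
  have yn1: "norm (y n) = 1" for n using proj_norm1[OF yp] .
  have "(\<lambda>n. y n * y n) \<longlonglongrightarrow> p * p" by (rule tendsto_mult[OF lim lim])
  then have "y \<longlonglongrightarrow> p * p" using yp(1) by simp
  from LIMSEQ_unique[OF lim this] have pp: "p * p = p" by simp
  have "(\<lambda>n. st (y n)) \<longlonglongrightarrow> st p" by (rule st_tendsto[OF lim])
  then have "y \<longlonglongrightarrow> st p" using yp(2) by simp
  from LIMSEQ_unique[OF lim this] have sp: "st p = p" by simp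
  have "(\<lambda>n. norm (y n)) \<longlonglongrightarrow> norm p" by (rule tendsto_norm[OF lim])
  then have "(\<lambda>n. 1) \<longlonglongrightarrow> norm p" using yn1 by simp
  then have "norm p = 1" by (simp add: LIMSEQ_const_iff)
  then have p0: "p \<noteq> 0" by auto
  have "q = 0 \<or> q = p" if q: "is_projection st q" "q * p = q" for q
  proof (rule ccontr)
    assume nq: "\<not> (q = 0 \<or> q = p)"
    have qq: "q * q = q" "st q = q" using q unfolding is_projection_def by auto
    have pq: "p * q = q" using arg_cong[OF q(2), of st] by (simp add: st_mult qq sp)
    define h where "h n = y n * q * y n" for n
    have "\<exists>a. h n = a *\<^sub>R y n" for n
    proof (rule corner_scalar[OF finS spS])
      show "minimal_projection st (y n)" using my by blast
      show "st (h n) = h n" unfolding h_def by (simp add: st_mult yp qq mult.assoc)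
      show "y n * h n = h n" unfolding h_def by (simp add: mult.assoc[symmetric] yp)
      show "h n * y n = h n" unfolding h_def by (simp add: mult.assoc yp)
    qed
    then obtain \<alpha> where \<alpha>: "\<And>n. h n = \<alpha> n *\<^sub>R y n" by metis
    have "norm (h n) \<le> 1" for n
    proof -
      have "norm (h n) \<le> norm (y n * q) * norm (y n)" unfolding h_def by (rule norm_mult_ineq)
      also have "\<dots> \<le> norm (y n) * norm q * norm (y n)"
        by (intro mult_right_mono norm_mult_ineq) simp
      also have "\<dots> \<le> 1" using yn1 proj_norm_le[OF qq] by simp
      finally show ?thesis .
    qed
    moreover have "norm (h n) = \<bar>\<alpha> n\<bar>" for n using \<alpha>[of n] yn1[of n] by simp
    ultimately have "\<bar>\<alpha> n\<bar> \<le> 1" for n by metis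
    then have "bounded (range \<alpha>)" unfolding bounded_iff by auto
    then obtain \<alpha>0 r where r: "strict_mono r" "(\<alpha> \<circ> r) \<longlonglongrightarrow> \<alpha>0"
      using bounded_imp_convergent_subsequence by blast
    have "(\<lambda>n. (\<alpha> \<circ> r) n *\<^sub>R (y \<circ> r) n) \<longlonglongrightarrow> \<alpha>0 *\<^sub>R p"
      by (rule tendsto_scaleR[OF r(2) LIMSEQ_subseq_LIMSEQ[OF lim r(1)]])
    moreover have "h \<longlonglongrightarrow> p * q * p" unfolding h_def by (rule tendsto_mult[OF tendsto_mult[OF lim tendsto_const] lim])
    then have "(h \<circ> r) \<longlonglongrightarrow> q" using LIMSEQ_subseq_LIMSEQ[OF _ r(1)] pq q(2) by simp
    moreover have "(h \<circ> r) = (\<lambda>n. (\<alpha> \<circ> r) n *\<^sub>R (y \<circ> r) n)" using \<alpha> by (simp add: o_def)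
    ultimately have qa: "q = \<alpha>0 *\<^sub>R p" using LIMSEQ_unique by (metis (no_types))
    then have "(\<alpha>0 * \<alpha>0) *\<^sub>R p = \<alpha>0 *\<^sub>R p" using qq(1) pp by simp
    then have "(\<alpha>0 * \<alpha>0 - \<alpha>0) *\<^sub>R p = 0" by (simp add: scaleR_diff_left)
    then have "\<alpha>0 * \<alpha>0 - \<alpha>0 = 0" using p0 by simp
    then have "\<alpha>0 = 0 \<or> \<alpha>0 = 1" by (simp add: algebra_simps)
    then show False using nq qa by auto
  qed
  then show ?thesis unfolding minimal_projection_def is_projection_def using pp sp p0 by blast
qed

lemma range_mult_subspace: "subspace (range ((*) (q::'a)))"
  unfolding subspace_def
proof (intro conjI ballI allI)
  show "0 \<in> range ((*) q)" by (rule range_eqI[where x=0]) simp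
  fix x y assume "x \<in> range ((*) q)" "y \<in> range ((*) q)"
  then obtain a b where "x = q * a" "y = q * b" by auto
  then show "x + y \<in> range ((*) q)" by (auto intro!: image_eqI[of _ _ "a + b"] simp: algebra_simps)
next
  fix c :: real and x assume "x \<in> range ((*) q)"
  then obtain a where "x = q * a" by auto
  then show "c *\<^sub>R x \<in> range ((*) q)" by (auto intro!: image_eqI[of _ _ "c *\<^sub>R a"])
qed

lemma minproj_exists: "\<exists>p. minimal_projection st p"
proof -
  obtain B0 :: "'a set" where B0: "independent B0" "UNIV \<subseteq> span B0"
    using basis_exists[of UNIV] by blast
  have fB0: "finite B0" using independent_span_bound[OF finS B0(1)] spS by simp
  interpret fd: finite_dimensional_vector_space "scaleR :: real \<Rightarrow> 'a \<Rightarrow> 'a" B0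
    by unfold_locales (use fB0 B0 in \<open>auto simp: dependent_raw_def span_raw_def\<close>)
  define V where "V q = range ((*) q)" for q :: 'a
  have ex: "\<exists>n (p::'a). is_projection st p \<and> p \<noteq> 0 \<and> dim (V p) = n"
    by (rule exI[of _ "dim (V 1)"], rule exI[of _ "1::'a"]) (simp add: is_projection_def)
  define n0 where "n0 = (LEAST n. \<exists>p. is_projection st p \<and> p \<noteq> 0 \<and> dim (V p) = n)"
  obtain p where p: "is_projection st p" "p \<noteq> 0" "dim (V p) = n0"
    using LeastI_ex[OF ex] unfolding n0_def by blast
  have "q = 0 \<or> q = p" if q: "is_projection st q" "q * p = q" for q
  proof (rule ccontr)
    assume nq: "\<not> (q = 0 \<or> q = p)"
    have qq: "q * q = q" "st q = q" using q unfolding is_projection_def by auto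
    have pp: "p * p = p" "st p = p" using p unfolding is_projection_def by auto
    have pq: "p * q = q" using arg_cong[OF q(2), of st] by (simp add: st_mult qq pp)
    have sub: "V q \<subseteq> V p" unfolding V_def
    proof
      fix x assume "x \<in> range ((*) q)"
      then obtain a where "x = q * a" by auto
      then have "x = p * (q * a)" by (simp add: mult.assoc[symmetric] pq)
      then show "x \<in> range ((*) p)" by blast
    qed
    have "p \<notin> V q"
    proof
      assume "p \<in> V q"
      then obtain x where "p = q * x" unfolding V_def by auto
      then have "q * p = p" by (simp add: mult.assoc[symmetric] qq)
      then show False using q(2) nq by simp
    qed
    moreover have "p \<in> V p" unfolding V_def by (auto intro!: image_eqI[of _ _ 1])
    ultimately have "V q \<subset> V p" using sub by blast
    moreover have e1: "span (V q) = V q" "span (V p) = V p"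
      using range_mult_subspace span_eq_iff unfolding V_def by blast+
    ultimately have "span (V q) \<subset> span (V p)" by (simp only: e1)
    then have "dim (V q) < dim (V p)" using fd.dim_psubset by (simp add: dim_raw_def span_raw_def)
    moreover have "n0 \<le> dim (V q)" unfolding n0_def using q nq by (intro Least_le) auto
    ultimately show False using p(3) by simp
  qed
  then show ?thesis using p unfolding minimal_projection_def by blast
qed

end

definition pdef :: "('a::real_normed_algebra_1 \<Rightarrow> 'a) \<Rightarrow> 'a \<Rightarrow> real" where
  "pdef st y = norm (y * y - y) + norm (st y - y)"

definition edef :: "('a::real_normed_algebra_1 \<Rightarrow> 'a) \<Rightarrow> 'a \<Rightarrow> real" where
  "edef st y = pdef st y + \<bar>1 - norm y\<bar>"

definition qdef :: "('a::real_normed_algebra_1 \<Rightarrow> 'a) \<Rightarrow> 'a \<Rightarrow> 'a \<Rightarrow> real" where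
  "qdef st q y = pdef st q + norm (q * y - q)"

definition mdef :: "'a::real_normed_algebra_1 \<Rightarrow> 'a \<Rightarrow> real" where
  "mdef q y = min (norm q) (norm (q - y))"

definition Hdef :: "real \<Rightarrow> ('a::real_normed_algebra_1 \<Rightarrow> 'a) \<Rightarrow> 'a \<Rightarrow> 'a \<Rightarrow> real" where
  "Hdef \<delta> st q y = max 0 (mdef q y - 1/2 - qdef st q y / \<delta>)"

definition gdef :: "real \<Rightarrow> ('a::real_normed_algebra_1 \<Rightarrow> 'a) \<Rightarrow> 'a \<Rightarrow> real" where
  "gdef \<delta> st y = (SUP q\<in>{q. norm q \<le> 1}. Hdef \<delta> st q y)"

definition ddef :: "real \<Rightarrow> ('a::real_normed_algebra_1 \<Rightarrow> 'a) \<Rightarrow> 'a \<Rightarrow> real" where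
  "ddef \<delta> st y = edef st y + gdef \<delta> st y"

lemma pdef_nonneg: "pdef st y \<ge> 0" by (simp add: pdef_def)
lemma edef_nonneg: "edef st y \<ge> 0" by (simp add: edef_def pdef_def)
lemma qdef_nonneg: "qdef st q y \<ge> 0" by (simp add: qdef_def pdef_def)
lemma Hdef_nonneg: "Hdef \<delta> st q y \<ge> 0" by (simp add: Hdef_def)

lemma Hdef_le: "\<delta> > 0 \<Longrightarrow> Hdef \<delta> st q y \<le> max 0 (norm q)"
  unfolding Hdef_def mdef_def
  using qdef_nonneg[of st q y] by (auto simp: max_def min_def divide_nonneg_pos) (smt (verit) divide_nonneg_pos)+

lemma bdd_H: assumes "\<delta> > 0" shows "bdd_above ((\<lambda>q. Hdef \<delta> st q y) ` {q. norm q \<le> 1})"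
proof (rule bdd_aboveI[of _ 1])
  fix x assume "x \<in> (\<lambda>q. Hdef \<delta> st q y) ` {q. norm q \<le> 1}"
  then obtain q where "norm q \<le> 1" "x = Hdef \<delta> st q y" by auto
  then show "x \<le> 1" using Hdef_le[OF assms, of st q y] by simp
qed

lemma sum3_zero: "norm a + norm b + c = (0::real) \<Longrightarrow> c \<ge> 0 \<Longrightarrow> a = 0 \<and> b = 0 \<and> c = 0"
  by (smt (verit) norm_ge_zero norm_eq_zero)

lemma H_le_g: "\<delta> > 0 \<Longrightarrow> norm q \<le> 1 \<Longrightarrow> Hdef \<delta> st q y \<le> gdef \<delta> st y"
  unfolding gdef_def by (rule cSUP_upper[OF _ bdd_H]) auto

lemma gdef_nonneg: "\<delta> > 0 \<Longrightarrow> gdef \<delta> st y \<ge> 0"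
  using H_le_g[of \<delta> 0 st y] Hdef_nonneg[of \<delta> st 0 y] by simp

lemma ddef_nonneg: "\<delta> > 0 \<Longrightarrow> ddef \<delta> st y \<ge> 0"
  unfolding ddef_def using edef_nonneg gdef_nonneg by (metis add_nonneg_nonneg)

context fcstar
begin

lemma proj_sub:
  assumes "is_projection st q" "is_projection st y" "q * y = q"
  shows "is_projection st (y - q)" "y * q = q"
proof -
  have qq: "q * q = q" "st q = q" "y * y = y" "st y = y" using assms unfolding is_projection_def by auto
  show yq: "y * q = q" using arg_cong[OF assms(3), of st] by (simp add: st_mult qq)
  show "is_projection st (y - q)" unfolding is_projection_def
    using qq yq assms(3) by (simp add: algebra_simps st_diff)
qed

lemma mdef_proj:
  assumes "is_projection st q" "is_projection st y" "q * y = q" "mdef q y \<le> 1/2"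
  shows "q = 0 \<or> q = y"
proof -
  have a: "norm q = 0 \<or> norm q = 1" using assms(1) proj_norm unfolding is_projection_def by auto
  have "is_projection st (y - q)" using proj_sub[OF assms(1-3)] by blast
  then have b: "norm (y - q) = 0 \<or> norm (y - q) = 1" using proj_norm[of "y - q"] unfolding is_projection_def by blast
  have "norm (q - y) = norm (y - q)" by (rule norm_minus_commute)
  show ?thesis
  proof (cases "norm q = 0")
    case True then show ?thesis by simp
  next
    case False
    then have "norm q = 1" using a by simp
    then have "norm (y - q) \<le> 1/2" using assms(4) \<open>norm (q - y) = norm (y - q)\<close>
      unfolding mdef_def by (simp add: min_def split: if_splits)
    then have "norm (y - q) = 0" using b by auto
    then show ?thesis by simp
  qed
qed

lemma edef_zero: "edef st y = 0 \<Longrightarrow> is_projection st y \<and> y \<noteq> 0"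
  unfolding edef_def pdef_def is_projection_def
  by (drule sum3_zero) auto

lemma qdef_zero: "qdef st q y = 0 \<Longrightarrow> is_projection st q \<and> q * y = q"
  unfolding qdef_def pdef_def is_projection_def
  by (drule sum3_zero) auto

lemma minproj_edef: "minimal_projection st p \<Longrightarrow> edef st p = 0"
  unfolding minimal_projection_def is_projection_def edef_def pdef_def
  using proj_norm1 by auto

lemma minproj_qdef: "minimal_projection st p \<Longrightarrow> is_projection st q \<Longrightarrow> q * p = q \<Longrightarrow> qdef st q p = 0"
  unfolding qdef_def pdef_def is_projection_def by auto

lemma tendsto_pdef: "y \<longlonglongrightarrow> l \<Longrightarrow> (\<lambda>k. pdef st (y k)) \<longlonglongrightarrow> pdef st l"
  unfolding pdef_def by (intro tendsto_add tendsto_norm tendsto_diff tendsto_mult st_tendsto) auto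

lemma tendsto_edef: "y \<longlonglongrightarrow> l \<Longrightarrow> (\<lambda>k. edef st (y k)) \<longlonglongrightarrow> edef st l"
  unfolding edef_def by (intro tendsto_add tendsto_pdef tendsto_rabs tendsto_diff tendsto_norm tendsto_const)

lemma tendsto_qdef: "q \<longlonglongrightarrow> q0 \<Longrightarrow> y \<longlonglongrightarrow> l \<Longrightarrow> (\<lambda>k. qdef st (q k) (y k)) \<longlonglongrightarrow> qdef st q0 l"
  unfolding qdef_def by (intro tendsto_add tendsto_pdef tendsto_norm tendsto_diff tendsto_mult) auto

lemma tendsto_mdef: "q \<longlonglongrightarrow> q0 \<Longrightarrow> y \<longlonglongrightarrow> l \<Longrightarrow> (\<lambda>k. mdef (q k) (y k)) \<longlonglongrightarrow> mdef q0 l"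
  unfolding mdef_def by (intro tendsto_min tendsto_norm tendsto_diff) auto

lemma tendsto_Hdef: "\<delta> > 0 \<Longrightarrow> y \<longlonglongrightarrow> l \<Longrightarrow> (\<lambda>k. Hdef \<delta> st q (y k)) \<longlonglongrightarrow> Hdef \<delta> st q l"
  unfolding Hdef_def
  by (intro tendsto_max tendsto_const tendsto_diff tendsto_divide tendsto_mdef tendsto_qdef) auto

lemma delta_exists:
  "\<exists>\<delta>>0. \<forall>p q. minimal_projection st p \<and> norm q \<le> 1 \<and> qdef st q p \<le> \<delta> \<longrightarrow> mdef q p \<le> 1/2"
proof (rule ccontr)
  assume "\<not> ?thesis"
  then have "\<forall>k::nat. \<exists>p q. minimal_projection st p \<and> norm q \<le> 1 \<and> qdef st q p \<le> 1 / (real k + 1) \<and> mdef q p > 1/2"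
    by (metis (no_types, lifting) not_le divide_pos_pos of_nat_add of_nat_0_le_iff zero_less_one add_nonneg_pos)
  then obtain p q where pq: "\<And>k. minimal_projection st (p k)" "\<And>k. norm (q k) \<le> 1"
    "\<And>k. qdef st (q k) (p k) \<le> 1 / (real k + 1)" "\<And>k. mdef (q k) (p k) > 1/2"
    by metis
  have "norm (p k) \<le> 1" for k
    using pq(1)[of k] proj_norm_le unfolding minimal_projection_def is_projection_def by blast
  then obtain p0 r1 where r1: "strict_mono r1" "(p \<circ> r1) \<longlonglongrightarrow> p0" using bwA by blast
  obtain q0 r2 where r2: "strict_mono r2" "((q \<circ> r1) \<circ> r2) \<longlonglongrightarrow> q0"
    using bwA[of "q \<circ> r1" 1] pq(2) by auto
  define r where "r = r1 \<circ> r2"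
  have r: "strict_mono r" unfolding r_def using r1(1) r2(1) by (rule strict_mono_o)
  have pl: "(p \<circ> r) \<longlonglongrightarrow> p0" unfolding r_def o_assoc[symmetric]
    using LIMSEQ_subseq_LIMSEQ[OF r1(2) r2(1)] by (simp add: o_assoc)
  have ql: "(q \<circ> r) \<longlonglongrightarrow> q0" using r2(2) unfolding r_def by (simp add: o_assoc)
  have mp0: "minimal_projection st p0" using minproj_closed[OF _ pl] pq(1) by simp
  have "(\<lambda>k. qdef st ((q \<circ> r) k) ((p \<circ> r) k)) \<longlonglongrightarrow> qdef st q0 p0"
    by (rule tendsto_qdef[OF ql pl])
  moreover have "(\<lambda>k. 1 / (real (r k) + 1)) \<longlonglongrightarrow> 0"
  proof -
    have "(\<lambda>k. 1 / (real k + 1)) \<longlonglongrightarrow> (0::real)"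
      using LIMSEQ_Suc[OF lim_const_over_n[of 1]] by (simp add: add.commute)
    from LIMSEQ_subseq_LIMSEQ[OF this r] show ?thesis by (simp add: o_def)
  qed
  ultimately have "qdef st q0 p0 \<le> 0"
    using pq(3) by (intro LIMSEQ_le[where X="\<lambda>k. qdef st ((q \<circ> r) k) ((p \<circ> r) k)"]) auto
  then have "qdef st q0 p0 = 0" using qdef_nonneg[of st q0 p0] by simp
  then have q0p: "is_projection st q0" "q0 * p0 = q0" using qdef_zero by auto
  have "(\<lambda>k. mdef ((q \<circ> r) k) ((p \<circ> r) k)) \<longlonglongrightarrow> mdef q0 p0" by (rule tendsto_mdef[OF ql pl])
  then have m0: "mdef q0 p0 \<ge> 1/2"
    using pq(4) by (intro LIMSEQ_le[OF tendsto_const]) (auto intro: less_imp_le)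
  have "q0 = 0 \<or> q0 = p0" using mp0 q0p unfolding minimal_projection_def by blast
  then have "mdef q0 p0 = 0" unfolding mdef_def by auto
  then show False using m0 by simp
qed

end

context fcstar
begin

lemma d_zero_on_T:
  assumes d: "\<delta> > 0" and dp: "\<forall>p q. minimal_projection st p \<and> norm q \<le> 1 \<and> qdef st q p \<le> \<delta> \<longrightarrow> mdef q p \<le> 1/2"
    and mp: "minimal_projection st p"
  shows "ddef \<delta> st p = 0"
proof -
  have H0: "Hdef \<delta> st q p = 0" if q: "norm q \<le> 1" for q
  proof (cases "qdef st q p \<le> \<delta>")
    case True
    then have "mdef q p \<le> 1/2" using dp mp q by blast
    moreover have "qdef st q p / \<delta> \<ge> 0" using qdef_nonneg[of st q p] d by simp
    ultimately have "mdef q p - 1/2 - qdef st q p / \<delta> \<le> 0" by linarith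
    then show ?thesis unfolding Hdef_def by (simp add: max_absorb1)
  next
    case False
    then have "qdef st q p / \<delta> > 1" using d by simp
    moreover have "mdef q p \<le> 1" using q unfolding mdef_def by auto
    ultimately show ?thesis unfolding Hdef_def by simp
  qed
  have "gdef \<delta> st p = (SUP q\<in>{q::'a. norm q \<le> 1}. (0::real))"
  proof -
    have "(\<lambda>q. Hdef \<delta> st q p) ` {q. norm q \<le> 1} = (\<lambda>q. 0::real) ` {q::'a. norm q \<le> 1}"
      by (force simp: H0 image_iff)
    then show ?thesis unfolding gdef_def by simp
  qed
  also have "\<dots> = 0" by (rule cSUP_const) (auto intro: exI[of _ 0])
  finally show ?thesis unfolding ddef_def using minproj_edef[OF mp] by simp
qed

lemma zero_closure:
  assumes d: "\<delta> > 0" and yl: "y \<longlonglongrightarrow> l" and c: "c \<longlonglongrightarrow> 0" and yc: "\<forall>k. ddef \<delta> st (y k) \<le> c k"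
  shows "minimal_projection st l"
proof -
  have "edef st (y k) \<le> c k" for k
    using yc gdef_nonneg[OF d, of st "y k"] unfolding ddef_def by (smt (verit))
  then have "edef st l \<le> 0" by (intro LIMSEQ_le[OF tendsto_edef[OF yl] c]) auto
  then have "edef st l = 0" using edef_nonneg[of st l] by simp
  then have lp: "is_projection st l" "l \<noteq> 0" using edef_zero by auto
  have Hl: "Hdef \<delta> st q l \<le> 0" if "norm q \<le> 1" for q
  proof -
    have "Hdef \<delta> st q (y k) \<le> c k" for k
      using yc H_le_g[OF d that, of st "y k"] edef_nonneg[of st "y k"] unfolding ddef_def
      by (smt (verit))
    then show ?thesis by (intro LIMSEQ_le[OF tendsto_Hdef[OF d yl] c]) auto
  qed
  have "q = 0 \<or> q = l" if q: "is_projection st q" "q * l = q" for q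
  proof -
    have "norm q \<le> 1" using q(1) proj_norm_le unfolding is_projection_def by blast
    then have "Hdef \<delta> st q l \<le> 0" by (rule Hl)
    moreover have "qdef st q l = 0" using q lp unfolding qdef_def pdef_def is_projection_def by simp
    ultimately have "mdef q l \<le> 1/2" unfolding Hdef_def by simp
    then show ?thesis using mdef_proj[OF q(1) lp(1) q(2)] by blast
  qed
  then show ?thesis unfolding minimal_projection_def using lp by blast
qed

end

context fcstar
begin

lemma minproj_norm: "minimal_projection st p \<Longrightarrow> norm p = 1"
  unfolding minimal_projection_def is_projection_def using proj_norm1 by blast

lemma rho_le: "minimal_projection st p \<Longrightarrow> rho_min st x \<le> norm (x - p)"
  unfolding rho_min_def by (rule cInf_lower) (auto intro: bdd_belowI[of _ 0])

lemma approx: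
  assumes d: "\<delta> > 0"
    and dp: "\<forall>p q. minimal_projection st p \<and> norm q \<le> 1 \<and> qdef st q p \<le> \<delta> \<longrightarrow> mdef q p \<le> 1/2"
    and e: "\<epsilon> > 0"
  shows "\<exists>K::nat. \<forall>x. norm x \<le> real n \<longrightarrow>
     \<bar>(INF y\<in>{y. norm y \<le> 1}. norm (x - y) + real K * ddef \<delta> st y) - rho_min st x\<bar> \<le> \<epsilon>"
proof -
  define \<Phi> where "\<Phi> K x = (INF y\<in>{y. norm y \<le> 1}. norm (x - y) + real K * ddef \<delta> st y)" for K x
  obtain p0 where p0: "minimal_projection st p0" using minproj_exists by blast
  have bdd: "bdd_below ((\<lambda>y. norm (x - y) + real K * ddef \<delta> st y) ` {y. norm y \<le> 1})" for K x
    by (rule bdd_belowI[of _ 0]) (auto intro!: add_nonneg_nonneg mult_nonneg_nonneg ddef_nonneg[OF d])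
  have upper: "\<Phi> K x \<le> rho_min st x" for K x
  proof -
    have "\<Phi> K x \<le> norm (x - p)" if "minimal_projection st p" for p
    proof -
      have "\<Phi> K x \<le> norm (x - p) + real K * ddef \<delta> st p"
        unfolding \<Phi>_def by (rule cINF_lower[OF bdd]) (use minproj_norm[OF that] in simp)
      then show ?thesis using d_zero_on_T[OF d dp that] by simp
    qed
    then show ?thesis unfolding rho_min_def using p0 by (intro cInf_greatest) auto
  qed
  have "\<exists>K. \<forall>x. norm x \<le> real n \<longrightarrow> rho_min st x - \<epsilon> \<le> \<Phi> K x"
  proof (rule ccontr)
    assume "\<not> ?thesis"
    then have "\<forall>K. \<exists>x. norm x \<le> real n \<and> \<Phi> K x < rho_min st x - \<epsilon>" by (auto simp: not_le)
    then obtain xs where xs: "\<And>K. norm (xs K) \<le> real n" "\<And>K. \<Phi> K (xs K) < rho_min st (xs K) - \<epsilon>"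
      by metis
    have "\<exists>y. norm y \<le> 1 \<and> norm (xs K - y) + real K * ddef \<delta> st y < rho_min st (xs K) - \<epsilon>" for K
    proof -
      have ne: "{y::'a. norm y \<le> 1} \<noteq> {}" by (metis mem_Collect_eq norm_zero zero_le_one empty_iff)
      show ?thesis using xs(2)[of K] unfolding \<Phi>_def cINF_less_iff[OF ne bdd] by auto
    qed
    then obtain ys where ys: "\<And>K. norm (ys K) \<le> 1"
      "\<And>K. norm (xs K - ys K) + real K * ddef \<delta> st (ys K) < rho_min st (xs K) - \<epsilon>"
      by metis
    have rb: "rho_min st (xs K) \<le> real n + 1" for K
    proof -
      have "rho_min st (xs K) \<le> norm (xs K - p0)" by (rule rho_le[OF p0])
      also have "\<dots> \<le> norm (xs K) + norm p0" by (rule norm_triangle_ineq4)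
      finally show ?thesis using xs(1)[of K] minproj_norm[OF p0] by simp
    qed
    have dK: "ddef \<delta> st (ys (Suc K)) \<le> (real n + 1) / (real K + 1)" for K
    proof -
      have "real (Suc K) * ddef \<delta> st (ys (Suc K)) \<le> real n + 1"
        using ys(2)[of "Suc K"] rb[of "Suc K"] e norm_ge_zero[of "xs (Suc K) - ys (Suc K)"] by linarith
      then show ?thesis by (simp add: field_simps add.commute)
    qed
    define xs' where "xs' K = xs (Suc K)" for K
    define ys' where "ys' K = ys (Suc K)" for K
    obtain x0 r1 where r1: "strict_mono r1" "(xs' \<circ> r1) \<longlonglongrightarrow> x0"
      using bwA[of xs' "real n"] xs(1) unfolding xs'_def by blast
    obtain y0 r2 where r2: "strict_mono r2" "((ys' \<circ> r1) \<circ> r2) \<longlonglongrightarrow> y0"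
      using bwA[of "ys' \<circ> r1" 1] ys(1) unfolding ys'_def by auto
    define r where "r = r1 \<circ> r2"
    have r: "strict_mono r" unfolding r_def using r1(1) r2(1) by (rule strict_mono_o)
    have xl: "(xs' \<circ> r) \<longlonglongrightarrow> x0"
      using LIMSEQ_subseq_LIMSEQ[OF r1(2) r2(1)] unfolding r_def by (simp add: o_assoc)
    have yl: "(ys' \<circ> r) \<longlonglongrightarrow> y0" using r2(2) unfolding r_def by (simp add: o_assoc)
    have cl: "(\<lambda>k. (real n + 1) / (real (r k) + 1)) \<longlonglongrightarrow> 0"
    proof -
      have "(\<lambda>k. (real n + 1) / (real k + 1)) \<longlonglongrightarrow> (0::real)"
        using LIMSEQ_Suc[OF lim_const_over_n[of "real n + 1"]] by (simp add: add.commute)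
      from LIMSEQ_subseq_LIMSEQ[OF this r] show ?thesis by (simp add: o_def)
    qed
    have y0m: "minimal_projection st y0"
      by (rule zero_closure[OF d yl cl]) (simp add: ys'_def dK)
    have ineq: "norm ((xs' \<circ> r) k - (ys' \<circ> r) k) \<le> norm ((xs' \<circ> r) k - y0) - \<epsilon>" for k
    proof -
      let ?K = "Suc (r k)"
      have a: "norm (xs ?K - ys ?K) + real ?K * ddef \<delta> st (ys ?K) < rho_min st (xs ?K) - \<epsilon>"
        by (rule ys(2))
      have b: "rho_min st (xs ?K) \<le> norm (xs ?K - y0)" by (rule rho_le[OF y0m])
      have c: "0 \<le> real ?K * ddef \<delta> st (ys ?K)"
        by (rule mult_nonneg_nonneg[OF of_nat_0_le_iff ddef_nonneg[OF d]])
      from a b c have "norm (xs ?K - ys ?K) \<le> norm (xs ?K - y0) - \<epsilon>" by linarith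
      then show ?thesis by (simp add: xs'_def ys'_def)
    qed
    have l1: "(\<lambda>k. norm ((xs' \<circ> r) k - (ys' \<circ> r) k)) \<longlonglongrightarrow> norm (x0 - y0)"
      by (intro tendsto_norm tendsto_diff xl yl)
    have l2: "(\<lambda>k. norm ((xs' \<circ> r) k - y0) - \<epsilon>) \<longlonglongrightarrow> norm (x0 - y0) - \<epsilon>"
      by (intro tendsto_diff tendsto_norm xl tendsto_const)
    have "norm (x0 - y0) \<le> norm (x0 - y0) - \<epsilon>"
      by (rule LIMSEQ_le[OF l1 l2]) (use ineq in auto)
    then show False using e by simp
  qed
  then obtain K where K: "\<And>x. norm x \<le> real n \<Longrightarrow> rho_min st x - \<epsilon> \<le> \<Phi> K x" by blast
  show ?thesis
    by (rule exI[of _ K]) (use K upper in \<open>force simp: \<Phi>_def abs_le_iff\<close>)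
qed

end

definition tsub :: "tm \<Rightarrow> tm \<Rightarrow> tm" where "tsub s t = Add s (Smult (-1) t)"

definition fmE :: fm where
  "fmE = Bin (+) (Bin (+) (Atom (tsub (Mult (Var 0) (Var 0)) (Var 0))) (Atom (tsub (Star (Var 0)) (Var 0))))
              (FUn (\<lambda>t. \<bar>1 - t\<bar>) (Atom (Var 0)))"

definition fmQ :: fm where
  "fmQ = Bin (+) (Bin (+) (Atom (tsub (Mult (Var 0) (Var 0)) (Var 0))) (Atom (tsub (Star (Var 0)) (Var 0))))
              (Atom (tsub (Mult (Var 0) (Var 1)) (Var 0)))"

definition fmM :: fm where
  "fmM = Bin min (Atom (Var 0)) (Atom (tsub (Var 0) (Var 1)))"

definition fmH :: "real \<Rightarrow> fm" where
  "fmH \<delta> = Bin (\<lambda>a b. max 0 (a - 1/2 - b * (1 / \<delta>))) fmM fmQ"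

definition fmD :: "real \<Rightarrow> fm" where
  "fmD \<delta> = Bin (+) fmE (FSup 1 (fmH \<delta>))"

definition fmPhi :: "real \<Rightarrow> real \<Rightarrow> fm" where
  "fmPhi \<delta> K = FInf 1 (Bin (\<lambda>a b. a + K * b) (Atom (tsub (Var 1) (Var 0))) (fmD \<delta>))"

lemma cont2: "continuous_on UNIV (\<lambda>x::real \<times> real. f (fst x) (snd x)) \<Longrightarrow> continuous_on UNIV (\<lambda>(a, b). f a b)"
  by (simp add: case_prod_unfold)

lemma wf_fmPhi: "wf_fm (fmPhi \<delta> K)"
  unfolding fmPhi_def fmD_def fmH_def fmM_def fmQ_def fmE_def
  unfolding wf_fm.simps by (intro conjI TrueI cont2 continuous_intros)

context cstar
begin

lemma cs_m1[simp]: "cs (-1) v = - v"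
  using cs_real[of "-1" v] by simp

lemma tsub_eval[simp]: "tm_eval st cs env (tsub s t) = tm_eval st cs env s - tm_eval st cs env t"
  by (simp add: tsub_def)

lemma fmE_eval: "fm_eval st cs (case_nat y env) fmE = edef st y"
  by (simp add: fmE_def edef_def pdef_def)

lemma fmH_eval: "fm_eval st cs (case_nat q (case_nat y env)) (fmH \<delta>) = Hdef \<delta> st q y"
  by (simp add: fmH_def fmM_def fmQ_def Hdef_def mdef_def qdef_def pdef_def)

lemma fmD_eval: "fm_eval st cs (case_nat y env) (fmD \<delta>) = ddef \<delta> st y"
  by (simp add: fmD_def fmE_eval fmH_eval ddef_def gdef_def)

lemma fmPhi_eval: "fm_eval st cs (case_nat x env) (fmPhi \<delta> K) =
   (INF y\<in>{y. norm y \<le> 1}. norm (x - y) + K * ddef \<delta> st y)"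
  by (simp add: fmPhi_def fmD_eval)

end

theorem theorem2p4:
  fixes st :: "'a::{real_normed_algebra_1,banach} \<Rightarrow> 'a" and cs :: "complex \<Rightarrow> 'a \<Rightarrow> 'a"
  assumes "fin_dim_cstar st cs"
  shows "definable_in st cs (rho_min st)"
proof -
  have ca: "cstar_alg st cs" and "\<exists>B. finite B \<and> (\<forall>x. \<exists>c. x = (\<Sum>b\<in>B. cs (c b) b))"
    using assms unfolding fin_dim_cstar_def by auto
  then obtain B where B: "finite B" "\<And>x. \<exists>c. x = (\<Sum>b\<in>B. cs (c b) b)" by blast
  interpret cstar st cs by (rule cstar.intro[OF ca])
  define S where "S = B \<union> (cs \<i>) ` B"
  have fS: "finite S" unfolding S_def using B(1) by simp
  have csdec: "cs z b = Re z *\<^sub>R b + Im z *\<^sub>R cs \<i> b" for z b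
  proof -
    have zz: "complex_of_real (Re z) + complex_of_real (Im z) * \<i> = z"
      by (simp add: complex_eq_iff)
    have "cs z b = cs (complex_of_real (Re z) + complex_of_real (Im z) * \<i>) b"
      by (simp only: zz)
    also have "\<dots> = Re z *\<^sub>R b + Im z *\<^sub>R cs \<i> b"
      by (simp add: cs_add_sc cs_mult_sc cs_real)
    finally show ?thesis .
  qed
  have spS: "span S = UNIV"
  proof -
    have "x \<in> span S" for x
    proof -
      obtain c where c: "x = (\<Sum>b\<in>B. cs (c b) b)" using B(2) by blast
      have "cs (c b) b \<in> span S" if "b \<in> B" for b
        unfolding csdec[of "c b" b] using that
        by (intro span_add span_scale span_base) (auto simp: S_def)
      then show ?thesis unfolding c by (intro span_sum) auto
    qed
    then show ?thesis by auto
  qed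
  interpret fcstar st cs S by unfold_locales (use fS spS in auto)
  obtain \<delta> where d: "\<delta> > 0"
    and dp: "\<forall>p q. minimal_projection st p \<and> norm q \<le> 1 \<and> qdef st q p \<le> \<delta> \<longrightarrow> mdef q p \<le> 1/2"
    using delta_exists by blast
  show ?thesis
    unfolding definable_in_def
  proof (intro allI impI)
    fix n :: nat and \<epsilon> :: real
    assume e: "\<epsilon> > 0"
    obtain K :: nat where K: "\<And>x. norm x \<le> real n \<Longrightarrow>
       \<bar>(INF y\<in>{y. norm y \<le> 1}. norm (x - y) + real K * ddef \<delta> st y) - rho_min st x\<bar> \<le> \<epsilon>"
      using approx[OF d dp e, of n] by blast
    show "\<exists>\<phi>. wf_fm \<phi> \<and> (\<forall>x env. norm x \<le> real n \<longrightarrow> \<bar>fm_eval st cs (case_nat x env) \<phi> - rho_min st x\<bar> \<le> \<epsilon>)"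
      by (rule exI[of _ "fmPhi \<delta> (real K)"]) (simp add: wf_fmPhi fmPhi_eval K)
  qed
qed

end
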